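(* Let $n\ge2$ and let $g_1,\dots,g_r\in\mathbb R[X_1,\dots,X_n]$ satisfy $1-\|\mathbf X\|_2^2\in\mathcal Q(\mathbf g)$ and $\|g_i\|\le\tfrac12$ for all $i$. Let $\mathfrak c\ge1,\textit{Ł}\ge1$ satisfy $D(x)^{\textit{Ł}}\le\mathfrak c\,G(x)$ on $[-1,1]^n$, let $\gamma(n,\mathbf g)\ge1$ be a constant depending only on $n,\mathbf g$ such that every $h$ with $\min_S h>0$ lies in $\mathcal Q_\ell(\mathbf g)$ whenever $\ell\ge\gamma(n,\mathbf g)\,d(h)^{3.5n\textit{Ł}}\epsilon(h)^{-2.5n\textit{Ł}}$, and put $\gamma'(n,\mathbf g)=3^{2.5n\textit{Ł}}\gamma(n,\mathbf g)$. Let $f\in\mathbb R[\mathbf X]$ with $f\ge0$ on $S$, $f^*=\min_Sf$, and $0<\epsilon\le\|f\|$. Then $f^*-f^*_{\mathrm{SoS},\ell}\le\epsilon$ for every $$\ell\ge\gamma'(n,\mathbf g)\,d(f)^{3.5n\textit{Ł}}\,\|f\|^{2.5n\textit{Ł}}\,\epsilon^{-2.5n\textit{Ł}}.$$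
   Context: $\Sigma^2$ sums of squares; $S=\{x:g_i(x)\ge0\ \forall i\}$ (nonempty); $\mathcal Q(\mathbf g)=\Sigma^2+\sum_i\Sigma^2g_i$; $\mathcal Q_\ell(\mathbf g)=\{s_0+\sum_is_ig_i: s_j\in\Sigma^2,\deg s_0\le\ell,\deg(s_ig_i)\le\ell\}$; $\|h\|=\max_{[-1,1]^n}|h|$; $d(h)=\deg h$; $\epsilon(h)=\min_Sh/\|h\|$; $G(x)=|\min\{g_1(x),\dots,g_r(x),0\}|$, $D(x)=\operatorname{dist}(x,S)$. The SoS relaxation value of order $\ell$ is $f^*_{\mathrm{SoS},\ell}=\sup\{\lambda\in\mathbb R: f-\lambda\in\mathcal Q_{2\ell}(\mathbf g)\}$. *)

theory Defs
  imports "HOL-Analysis.Analysis" "HOL-Library.Poly_Mapping"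
begin

text \<open>Real multivariate polynomials in the variables indexed by the finite type 'n
  (so n = CARD('n)): a finitely supported map from exponent vectors (monomials)
  to real coefficients.\<close>

type_synonym 'n mpoly = "('n \<Rightarrow>\<^sub>0 nat) \<Rightarrow>\<^sub>0 real"

definition mpeval :: "'n::finite mpoly \<Rightarrow> real^'n \<Rightarrow> real" where
  "mpeval p x = (\<Sum>m\<in>Poly_Mapping.keys p. Poly_Mapping.lookup p m * (\<Prod>i\<in>Poly_Mapping.keys m. (x $ i) ^ Poly_Mapping.lookup m i))"

text \<open>total degree (degree of the zero polynomial is 0)\<close>
definition mpdeg :: "'n::finite mpoly \<Rightarrow> nat" where
  "mpdeg p = Max (insert 0 ((\<lambda>m::'n \<Rightarrow>\<^sub>0 nat. \<Sum>i\<in>Poly_Mapping.keys m. Poly_Mapping.lookup m i) ` Poly_Mapping.keys p))"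

definition mpconst :: "real \<Rightarrow> 'n::finite mpoly" where
  "mpconst c = Poly_Mapping.single 0 c"

definition mpvar :: "'n::finite \<Rightarrow> 'n mpoly" where
  "mpvar i = Poly_Mapping.single (Poly_Mapping.single i 1) 1"

definition ball_poly :: "'n::finite mpoly" where
  "ball_poly = 1 - (\<Sum>i\<in>UNIV. mpvar i * mpvar i)"

definition is_sos :: "'n::finite mpoly \<Rightarrow> bool" where
  "is_sos p \<longleftrightarrow> (\<exists>qs. p = sum_list (map (\<lambda>q. q * q) qs))"

definition semialg :: "(nat \<Rightarrow> 'n::finite mpoly) \<Rightarrow> nat \<Rightarrow> (real^'n) set" where
  "semialg g r = {x. \<forall>i<r. mpeval (g i) x \<ge> 0}"

definition quadmod :: "(nat \<Rightarrow> 'n::finite mpoly) \<Rightarrow> nat \<Rightarrow> 'n mpoly set" where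
  "quadmod g r = {p. \<exists>s0 s. is_sos s0 \<and> (\<forall>i<r. is_sos (s i)) \<and>
                       p = s0 + (\<Sum>i<r. s i * g i)}"

definition quadmod_trunc :: "(nat \<Rightarrow> 'n::finite mpoly) \<Rightarrow> nat \<Rightarrow> nat \<Rightarrow> 'n mpoly set" where
  "quadmod_trunc g r l = {p. \<exists>s0 s. is_sos s0 \<and> (\<forall>i<r. is_sos (s i)) \<and>
       mpdeg s0 \<le> l \<and> (\<forall>i<r. mpdeg (s i * g i) \<le> l) \<and>
       p = s0 + (\<Sum>i<r. s i * g i)}"

definition cube :: "(real^'n::finite) set" where
  "cube = {x. \<forall>i. \<bar>x $ i\<bar> \<le> 1}"

definition supnorm :: "'n::finite mpoly \<Rightarrow> real" where
  "supnorm h = (SUP x\<in>cube. \<bar>mpeval h x\<bar>)"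

definition minS :: "(nat \<Rightarrow> 'n::finite mpoly) \<Rightarrow> nat \<Rightarrow> 'n mpoly \<Rightarrow> real" where
  "minS g r h = (INF x\<in>semialg g r. mpeval h x)"

definition eps_of :: "(nat \<Rightarrow> 'n::finite mpoly) \<Rightarrow> nat \<Rightarrow> 'n mpoly \<Rightarrow> real" where
  "eps_of g r h = minS g r h / supnorm h"

definition Gfun :: "(nat \<Rightarrow> 'n::finite mpoly) \<Rightarrow> nat \<Rightarrow> real^'n \<Rightarrow> real" where
  "Gfun g r x = \<bar>Min (insert 0 ((\<lambda>i. mpeval (g i) x) ` {..<r}))\<bar>"

definition Dfun :: "(nat \<Rightarrow> 'n::finite mpoly) \<Rightarrow> nat \<Rightarrow> real^'n \<Rightarrow> real" where
  "Dfun g r x = infdist x (semialg g r)"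

definition sos_val :: "(nat \<Rightarrow> 'n::finite mpoly) \<Rightarrow> nat \<Rightarrow> 'n mpoly \<Rightarrow> nat \<Rightarrow> real" where
  "sos_val g r f l = Sup {lam. f - mpconst lam \<in> quadmod_trunc g r (2 * l)}"

end

theory Submission
  imports Defs
begin

definition mono_ev :: "('n::finite \<Rightarrow>\<^sub>0 nat) \<Rightarrow> real^'n \<Rightarrow> real" where
  "mono_ev m x = (\<Prod>i\<in>UNIV. (x $ i) ^ Poly_Mapping.lookup m i)"

lemma mono_ev_keys: "(\<Prod>i\<in>Poly_Mapping.keys m. (x $ i) ^ Poly_Mapping.lookup m i) = mono_ev m x"
  unfolding mono_ev_def
  by (rule prod.mono_neutral_left) (auto simp: in_keys_iff)

lemma mono_ev_add: "mono_ev (a + b) x = mono_ev a x * mono_ev b x"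
  unfolding mono_ev_def by (simp add: lookup_add power_add prod.distrib)

lemma mpeval_alt: "mpeval p x = (\<Sum>m\<in>Poly_Mapping.keys p. Poly_Mapping.lookup p m * mono_ev m x)"
  unfolding mpeval_def mono_ev_keys ..

lemma mpeval_superset: "finite A \<Longrightarrow> Poly_Mapping.keys p \<subseteq> A \<Longrightarrow>
   mpeval p x = (\<Sum>m\<in>A. Poly_Mapping.lookup p m * mono_ev m x)"
  unfolding mpeval_alt by (rule sum.mono_neutral_left) (auto simp: in_keys_iff)

lemma mpeval_add: "mpeval (p + q) x = mpeval p x + mpeval q x"
proof -
  let ?A = "Poly_Mapping.keys p \<union> Poly_Mapping.keys q"
  have "mpeval (p + q) x = (\<Sum>m\<in>?A. Poly_Mapping.lookup (p+q) m * mono_ev m x)"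
    using keys_add[of p q] by (intro mpeval_superset) auto
  also have "\<dots> = (\<Sum>m\<in>?A. Poly_Mapping.lookup p m * mono_ev m x) + (\<Sum>m\<in>?A. Poly_Mapping.lookup q m * mono_ev m x)"
    by (simp add: lookup_add distrib_right sum.distrib)
  also have "\<dots> = mpeval p x + mpeval q x"
    by (subst (1 2) mpeval_superset[of ?A]) auto
  finally show ?thesis .
qed

lemma mpeval_zero [simp]: "mpeval 0 x = 0"
  unfolding mpeval_def by simp

lemma mpeval_uminus: "mpeval (- p) x = - mpeval p x"
  using mpeval_add[of p "-p" x] by simp

lemma mpeval_diff: "mpeval (p - q) x = mpeval p x - mpeval q x"
  using mpeval_add[of p "-q" x] by (simp add: mpeval_uminus)

lemma mpeval_sum: "mpeval (sum F A) x = (\<Sum>a\<in>A. mpeval (F a) x)"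
  by (induction A rule: infinite_finite_induct) (auto simp: mpeval_add)

lemma mpeval_single: "mpeval (Poly_Mapping.single m c) x = c * mono_ev m x"
  unfolding mpeval_alt by auto

lemma mp_decomp: "p = (\<Sum>m\<in>Poly_Mapping.keys p. Poly_Mapping.single m (Poly_Mapping.lookup p m))"
proof (rule poly_mapping_eqI)
  fix k
  show "Poly_Mapping.lookup p k = Poly_Mapping.lookup (\<Sum>m\<in>Poly_Mapping.keys p. Poly_Mapping.single m (Poly_Mapping.lookup p m)) k"
    unfolding lookup_sum lookup_single
    by (cases "k \<in> Poly_Mapping.keys p") (auto simp: when_def in_keys_iff)
qed

lemma mpeval_mult: "mpeval (p * q) x = mpeval p x * mpeval q x"
proof -
  have "p * q = (\<Sum>a\<in>Poly_Mapping.keys p. Poly_Mapping.single a (Poly_Mapping.lookup p a)) *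
     (\<Sum>b\<in>Poly_Mapping.keys q. Poly_Mapping.single b (Poly_Mapping.lookup q b))"
    using mp_decomp[of p] mp_decomp[of q] by simp
  also have "\<dots> = (\<Sum>a\<in>Poly_Mapping.keys p. \<Sum>b\<in>Poly_Mapping.keys q.
      Poly_Mapping.single (a + b) (Poly_Mapping.lookup p a * Poly_Mapping.lookup q b))"
    unfolding sum_product by (simp add: mult_single)
  finally have "mpeval (p * q) x = (\<Sum>a\<in>Poly_Mapping.keys p. \<Sum>b\<in>Poly_Mapping.keys q.
      (Poly_Mapping.lookup p a * mono_ev a x) * (Poly_Mapping.lookup q b * mono_ev b x))"
    by (simp add: mpeval_sum mpeval_single mono_ev_add mult_ac)
  also have "\<dots> = mpeval p x * mpeval q x"
    by (simp add: mpeval_alt sum_product)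
  finally show ?thesis .
qed

lemma mpeval_const [simp]: "mpeval (mpconst c) x = c"
  unfolding mpconst_def mpeval_single mono_ev_def by simp

lemma mpeval_one [simp]: "mpeval 1 x = 1"
  using mpeval_const[of 1 x] unfolding mpconst_def by simp

lemma mpeval_var [simp]: "mpeval (mpvar i) x = x $ i"
proof -
  have eq: "(\<Prod>j\<in>UNIV. x $ j ^ (Suc 0 when i = j)) = (\<Prod>j\<in>UNIV. if i = j then x $ j else 1)"
    by (rule prod.cong) (auto simp: when_def)
  thus ?thesis
    unfolding mpvar_def mpeval_single mono_ev_def lookup_single using eq by (simp add: prod.delta)
qed

lemma sos_nonneg: "is_sos p \<Longrightarrow> mpeval p x \<ge> 0"
proof -
  have "mpeval (sum_list (map (\<lambda>q. q * q) qs)) x \<ge> 0" for qs :: "'a mpoly list"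
    by (induction qs) (auto simp: mpeval_add mpeval_mult)
  thus "is_sos p \<Longrightarrow> mpeval p x \<ge> 0" unfolding is_sos_def by auto
qed

lemma quadmod_nonneg: "p \<in> quadmod g r \<Longrightarrow> x \<in> semialg g r \<Longrightarrow> mpeval p x \<ge> 0"
proof -
  assume p: "p \<in> quadmod g r" and x: "x \<in> semialg g r"
  from p obtain s0 s where s: "is_sos s0" "\<forall>i<r. is_sos (s i)" "p = s0 + (\<Sum>i<r. s i * g i)"
    unfolding quadmod_def by blast
  have "0 \<le> mpeval s0 x + (\<Sum>i<r. mpeval (s i) x * mpeval (g i) x)"
    using s x unfolding semialg_def
    by (intro add_nonneg_nonneg sum_nonneg mult_nonneg_nonneg) (auto intro: sos_nonneg)
  thus ?thesis using s by (simp add: mpeval_add mpeval_sum mpeval_mult)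
qed

lemma quadmod_trunc_sub: "quadmod_trunc g r l \<subseteq> quadmod g r"
  unfolding quadmod_def quadmod_trunc_def by blast

lemma semialg_cube: assumes "ball_poly \<in> quadmod g r" shows "semialg g r \<subseteq> cube"
proof
  fix x assume "x \<in> semialg g r"
  from quadmod_nonneg[OF assms this] have "(\<Sum>i\<in>UNIV. x$i * x$i) \<le> 1"
    unfolding ball_poly_def by (simp add: mpeval_diff mpeval_sum mpeval_mult)
  moreover have "x$i * x$i \<le> (\<Sum>i\<in>UNIV. x$i * x$i)" for i
    by (rule member_le_sum) auto
  ultimately have "x$i * x$i \<le> 1" for i by (meson order_trans)
  hence "\<bar>x$i\<bar> \<le> 1" for i by (metis abs_le_square_iff abs_one mult_1 power2_eq_square)
  thus "x \<in> cube" unfolding cube_def by auto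
qed


lemma mpdeg_minus_const: "mpdeg (f - mpconst c) \<le> mpdeg (f::'n::finite mpoly)"
proof -
  let ?d = "\<lambda>m::'n \<Rightarrow>\<^sub>0 nat. \<Sum>i\<in>Poly_Mapping.keys m. Poly_Mapping.lookup m i"
  have "Poly_Mapping.keys (f - mpconst c) \<subseteq> Poly_Mapping.keys f \<union> {0}"
    using keys_diff[of f "mpconst c"] unfolding mpconst_def by (auto split: if_splits)
  hence "insert 0 (?d ` Poly_Mapping.keys (f - mpconst c)) \<subseteq> insert 0 (?d ` Poly_Mapping.keys f)"
    by auto
  thus ?thesis unfolding mpdeg_def by (intro Max_mono) auto
qed

lemma cube_bound: "x \<in> cube \<Longrightarrow> \<bar>mpeval h x\<bar> \<le> (\<Sum>m\<in>Poly_Mapping.keys h. \<bar>Poly_Mapping.lookup h m\<bar>)"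
proof -
  assume x: "x \<in> cube"
  have mb: "\<bar>mono_ev m x\<bar> \<le> 1" for m
  proof -
    have "\<bar>mono_ev m x\<bar> = (\<Prod>i\<in>UNIV. \<bar>x $ i\<bar> ^ Poly_Mapping.lookup m i)"
      unfolding mono_ev_def by (simp add: abs_prod power_abs)
    also have "\<dots> \<le> 1"
      using x unfolding cube_def by (intro prod_le_1) (auto intro: power_le_one)
    finally show ?thesis .
  qed
  have "\<bar>mpeval h x\<bar> \<le> (\<Sum>m\<in>Poly_Mapping.keys h. \<bar>Poly_Mapping.lookup h m * mono_ev m x\<bar>)"
    unfolding mpeval_alt by (rule sum_abs)
  also have "\<dots> \<le> (\<Sum>m\<in>Poly_Mapping.keys h. \<bar>Poly_Mapping.lookup h m\<bar>)"
    using mb by (intro sum_mono) (auto simp: abs_mult intro: mult_left_le)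
  finally show ?thesis .
qed

lemma cube_ne: "(cube :: (real^'n::finite) set) \<noteq> {}"
proof -
  have "(0::real^'n) \<in> cube" unfolding cube_def by simp
  thus ?thesis by auto
qed

lemma supnorm_bdd: "bdd_above ((\<lambda>x. \<bar>mpeval h x\<bar>) ` cube)"
  using cube_bound by (intro bdd_aboveI2) blast

lemma supnorm_upper: "x \<in> cube \<Longrightarrow> \<bar>mpeval h x\<bar> \<le> supnorm h"
  unfolding supnorm_def by (rule cSUP_upper[OF _ supnorm_bdd])

lemma supnorm_minus_const: "supnorm (h - mpconst c) \<le> supnorm h + \<bar>c\<bar>"
  unfolding supnorm_def[of "h - mpconst c"]
proof (rule cSUP_least[OF cube_ne])
  fix x :: "real^'a" assume x: "x \<in> cube"
  have "\<bar>mpeval (h - mpconst c) x\<bar> \<le> \<bar>mpeval h x\<bar> + \<bar>c\<bar>"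
    by (simp add: mpeval_diff abs_triangle_ineq4)
  thus "\<bar>mpeval (h - mpconst c) x\<bar> \<le> supnorm h + \<bar>c\<bar>"
    using supnorm_upper[OF x, of h] by linarith
qed

theorem mainTheorem5:
  fixes g :: "nat \<Rightarrow> 'n::finite mpoly" and r :: nat
    and c L \<gamma> \<epsilon> :: real and f :: "'n mpoly" and l :: nat
  assumes n2: "CARD('n) \<ge> 2"
    and S_ne: "semialg g r \<noteq> {}"
    and arch: "ball_poly \<in> quadmod g r"
    and gnorm: "\<forall>i<r. supnorm (g i) \<le> 1/2"
    and c1: "c \<ge> 1" and L1: "L \<ge> 1"
    and loj: "\<forall>x\<in>cube. Dfun g r x powr L \<le> c * Gfun g r x"
    and \<gamma>1: "\<gamma> \<ge> 1"
    and \<gamma>_prop: "\<forall>h::'n mpoly. \<forall>k::nat. minS g r h > 0 \<longrightarrow>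
         real k \<ge> \<gamma> * real (mpdeg h) powr (3.5 * CARD('n) * L) * eps_of g r h powr (- 2.5 * CARD('n) * L)
         \<longrightarrow> h \<in> quadmod_trunc g r k"
    and fpos: "\<forall>x\<in>semialg g r. mpeval f x \<ge> 0"
    and \<epsilon>pos: "0 < \<epsilon>" and \<epsilon>le: "\<epsilon> \<le> supnorm f"
    and lbig: "real l \<ge> (3 powr (2.5 * CARD('n) * L) * \<gamma>) * real (mpdeg f) powr (3.5 * CARD('n) * L)
                 * supnorm f powr (2.5 * CARD('n) * L) * \<epsilon> powr (- 2.5 * CARD('n) * L)"
  shows "minS g r f - sos_val g r f l \<le> \<epsilon>"
proof -
  define S where "S = semialg g r"
  define fs where "fs = minS g r f"
  define F where "F = supnorm f"
  define N where "N = 2.5 * real CARD('n) * L"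
  define P where "P = 3.5 * real CARD('n) * L"
  have Npos: "N > 0" and Ppos: "P > 0" using L1 unfolding N_def P_def by auto
  obtain x0 where x0: "x0 \<in> S" using S_ne unfolding S_def by auto
  have Scube: "S \<subseteq> cube" using semialg_cube[OF arch] unfolding S_def .
  have bddf: "bdd_below ((\<lambda>x. mpeval f x) ` S)"
    using fpos unfolding S_def by (intro bdd_belowI2) auto
  have fs_le: "fs \<le> mpeval f x" if "x \<in> S" for x
    unfolding fs_def minS_def S_def[symmetric] by (rule cINF_lower[OF bddf that])
  have fs_ge: "fs \<ge> 0"
    unfolding fs_def minS_def S_def[symmetric]
    using S_ne fpos unfolding S_def by (intro cINF_greatest) auto
  have Fpos: "F > 0" using \<epsilon>pos \<epsilon>le unfolding F_def by linarith
  have "mpeval f x0 \<le> F" using supnorm_upper[of x0 f] x0 Scube unfolding F_def by auto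
  hence fsF: "fs \<le> F" using fs_le[OF x0] by linarith
  define cc where "cc = fs - \<epsilon>"
  define h where "h = f - mpconst cc"
  have hev: "mpeval h x = mpeval f x - cc" for x unfolding h_def by (simp add: mpeval_diff)
  have minh: "minS g r h = \<epsilon>"
  proof -
    have bddh: "bdd_below ((\<lambda>x. mpeval h x) ` S)"
      using fs_le unfolding hev by (intro bdd_belowI2[where m="fs - cc"]) auto
    have "(INF x\<in>S. mpeval h x) \<ge> fs - cc"
      using x0 fs_le unfolding hev by (intro cINF_greatest) auto
    moreover have "(INF x\<in>S. mpeval h x) + cc \<le> fs"
    proof -
      have "(INF x\<in>S. mpeval h x) + cc \<le> (INF x\<in>S. mpeval f x)"
      proof (rule cINF_greatest)
        show "S \<noteq> {}" using x0 by auto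
        fix x assume "x \<in> S"
        from cINF_lower[OF bddh this] show "(INF x\<in>S. mpeval h x) + cc \<le> mpeval f x"
          unfolding hev by linarith
      qed
      thus ?thesis unfolding fs_def minS_def S_def .
    qed
    ultimately show ?thesis unfolding minS_def S_def[symmetric] cc_def by linarith
  qed
  have shle: "supnorm h \<le> 3 * F"
  proof -
    have "\<bar>cc\<bar> \<le> F" unfolding cc_def using fs_ge fsF \<epsilon>pos \<epsilon>le F_def by auto
    thus ?thesis using supnorm_minus_const[of f cc] Fpos unfolding h_def F_def by linarith
  qed
  have shpos: "supnorm h > 0"
    using supnorm_upper[of x0 h] x0 Scube fs_le[OF x0] \<epsilon>pos unfolding hev cc_def by auto
  have epsh: "eps_of g r h \<ge> \<epsilon> / (3 * F)"
    unfolding eps_of_def minh using shle shpos \<epsilon>pos Fpos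
    by (intro divide_left_mono) auto
  have e1: "eps_of g r h powr (- N) \<le> (\<epsilon> / (3 * F)) powr (- N)"
    using Npos \<epsilon>pos Fpos epsh by (intro powr_mono2') auto
  have e2: "(\<epsilon> / (3 * F)) powr (- N) = 3 powr N * F powr N * \<epsilon> powr (- N)"
    using \<epsilon>pos Fpos
    by (simp add: powr_divide powr_mult powr_minus field_simps)
  have d1: "real (mpdeg h) powr P \<le> real (mpdeg f) powr P"
    using Ppos mpdeg_minus_const[of f cc] unfolding h_def by (intro powr_mono2) auto
  have "\<gamma> * real (mpdeg h) powr P * eps_of g r h powr (- N)
      \<le> \<gamma> * real (mpdeg f) powr P * (3 powr N * F powr N * \<epsilon> powr (- N))"
    using e1 e2 d1 \<gamma>1 by (intro mult_mono) auto
  also have "\<dots> \<le> real l"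
    using lbig unfolding N_def P_def F_def by (simp add: mult_ac)
  also have "\<dots> \<le> real (2 * l)" by simp
  finally have "h \<in> quadmod_trunc g r (2 * l)"
    using \<gamma>_prop minh \<epsilon>pos unfolding N_def P_def by auto
  hence mem: "cc \<in> {lam. f - mpconst lam \<in> quadmod_trunc g r (2 * l)}" unfolding h_def by simp
  have bdd: "bdd_above {lam. f - mpconst lam \<in> quadmod_trunc g r (2 * l)}"
  proof (rule bdd_aboveI)
    fix lam assume "lam \<in> {lam. f - mpconst lam \<in> quadmod_trunc g r (2 * l)}"
    hence "f - mpconst lam \<in> quadmod g r" using quadmod_trunc_sub by auto
    from quadmod_nonneg[OF this] x0 show "lam \<le> mpeval f x0"
      unfolding S_def by (simp add: mpeval_diff)
  qed
  have "cc \<le> sos_val g r f l" unfolding sos_val_def by (rule cSup_upper[OF mem bdd])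
  thus ?thesis unfolding cc_def fs_def by linarith
qed

end
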